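(* Let $(X,d)$ be a compact metric space, $(\Omega,\mathcal{B},\mathbf{P})$ a probability space, and $\xi=\xi(x)=\xi(x,\omega)$, $x\in X$, a separable real-valued random field which is continuous with respect to $d$ with probability one. Let $\Phi$ be an Orlicz function satisfying the $\Delta_2$ condition $\overline{\lim}_{u\to\infty}\Phi(2u)/\Phi(u)<\infty$, and assume $$\Big\|\sup_{x\in X}|\xi(x)|\Big\|_{\Phi}<\infty .$$ Then there exist a random variable $\tau_0\ge 0$ with $\|\tau_0\|_{\Phi}=1$ and a non-random function $g:[0,\operatorname{diam}(d,X)]\to[0,\infty)$ which is continuous, strictly increasing, with $g(0)=g(0+)=0$, such that with probability one $$\Delta(\xi,\delta)\le \tau_0\cdot g(\delta)\quad\text{for all }\delta\in[0,\operatorname{diam}(d,X)].$$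
   Context: For a function $f:X\to\mathbb{R}$ the modulus of continuity is $\Delta(f,\delta)=\sup_{d(x,y)\le\delta}|f(x)-f(y)|$, $\delta\ge0$, and $\operatorname{diam}(d,X)=\sup_{x,y\in X}d(x,y)$. An Orlicz function is a function $\Phi:\mathbb{R}\to[0,\infty)$ that is convex, even, continuous, twice continuously differentiable on $u\ge2$, strictly increasing on $[0,\infty)$, with $\Phi(0)=0$ and $\lim_{|u|\to\infty}\Phi(u)=\infty$. The Orlicz space $L(\Phi)$ over $(\Omega,\mathcal{B},\mathbf{P})$ carries the Luxemburg norm $\|\zeta\|_{\Phi}=\inf\{k>0:\ \mathbf{E}\,\Phi(\zeta/k)\le1\}$. *)

theory Defs
  imports "HOL-Probability.Probability"
begin

definition modulus_cont :: "'a::metric_space set \<Rightarrow> ('a \<Rightarrow> real) \<Rightarrow> real \<Rightarrow> real" where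
  "modulus_cont X f \<delta> = (SUP p \<in> {(x,y). x \<in> X \<and> y \<in> X \<and> dist x y \<le> \<delta>}. \<bar>f (fst p) - f (snd p)\<bar>)"

definition orlicz_function :: "(real \<Rightarrow> real) \<Rightarrow> bool" where
  "orlicz_function \<Phi> \<longleftrightarrow>
     (\<forall>u. \<Phi> u \<ge> 0) \<and>
     convex_on UNIV \<Phi> \<and>
     (\<forall>u. \<Phi> (- u) = \<Phi> u) \<and>
     continuous_on UNIV \<Phi> \<and>
     (\<exists>\<Phi>' \<Phi>''. (\<forall>u\<ge>2. (\<Phi> has_real_derivative \<Phi>' u) (at u within {2..}) \<and>
                        (\<Phi>' has_real_derivative \<Phi>'' u) (at u within {2..})) \<and>
                 continuous_on {2..} \<Phi>'') \<and>
     strict_mono_on {0..} \<Phi> \<and>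
     \<Phi> 0 = 0 \<and>
     filterlim \<Phi> at_top at_top \<and> filterlim \<Phi> at_top at_bot"

definition delta2 :: "(real \<Rightarrow> real) \<Rightarrow> bool" where
  "delta2 \<Phi> \<longleftrightarrow> Limsup at_top (\<lambda>u. ereal (\<Phi> (2 * u) / \<Phi> u)) < \<infinity>"

text \<open>Luxemburg norm (value \<infinity> if no admissible k exists).\<close>
definition orlicz_norm :: "'b measure \<Rightarrow> (real \<Rightarrow> real) \<Rightarrow> ('b \<Rightarrow> real) \<Rightarrow> ereal" where
  "orlicz_norm M \<Phi> \<zeta> =
     Inf (ereal ` {k. k > 0 \<and> (\<integral>\<^sup>+ \<omega>. ennreal (\<Phi> (\<zeta> \<omega> / k)) \<partial>M) \<le> 1})"

definition separable_field :: "'b measure \<Rightarrow> 'a::metric_space set \<Rightarrow> ('a \<Rightarrow> 'b \<Rightarrow> real) \<Rightarrow> bool" where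
  "separable_field M X \<xi> \<longleftrightarrow>
     (\<exists>S N. countable S \<and> S \<subseteq> X \<and> N \<in> null_sets M \<and>
        (\<forall>\<omega> \<in> space M - N. \<forall>x \<in> X. \<exists>s. (\<forall>n. s n \<in> S) \<and> s \<longlonglongrightarrow> x \<and>
              (\<lambda>n. \<xi> (s n) \<omega>) \<longlonglongrightarrow> \<xi> x \<omega>))"

end

theory Submission
  imports Defs
begin


lemma orl_nonneg: "orlicz_function \<Phi> \<Longrightarrow> \<Phi> u \<ge> 0"
  unfolding orlicz_function_def by auto
lemma orl_zero: "orlicz_function \<Phi> \<Longrightarrow> \<Phi> 0 = 0"
  unfolding orlicz_function_def by auto
lemma orl_cont: "orlicz_function \<Phi> \<Longrightarrow> continuous_on UNIV \<Phi>"
  unfolding orlicz_function_def by auto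
lemma orl_smono: "orlicz_function \<Phi> \<Longrightarrow> 0 \<le> a \<Longrightarrow> a < b \<Longrightarrow> \<Phi> a < \<Phi> b"
  unfolding orlicz_function_def strict_mono_on_def by auto
lemma orl_mono: "orlicz_function \<Phi> \<Longrightarrow> 0 \<le> a \<Longrightarrow> a \<le> b \<Longrightarrow> \<Phi> a \<le> \<Phi> b"
  using orl_smono[of \<Phi> a b] by (cases "a = b") auto
lemma orl_pos: "orlicz_function \<Phi> \<Longrightarrow> 0 < u \<Longrightarrow> 0 < \<Phi> u"
  using orl_smono[of \<Phi> 0 u] orl_zero[of \<Phi>] by auto
lemma orl_meas: "orlicz_function \<Phi> \<Longrightarrow> f \<in> borel_measurable M \<Longrightarrow> (\<lambda>x. \<Phi> (f x)) \<in> borel_measurable M"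
  by (rule borel_measurable_continuous_on[OF orl_cont])
lemma orl_scale: assumes "orlicz_function \<Phi>" "0 \<le> t" "t \<le> 1" shows "\<Phi> (t * x) \<le> t * \<Phi> x"
proof -
  have c: "convex_on UNIV \<Phi>" using assms(1) unfolding orlicz_function_def by auto
  have "\<Phi> ((1 - t) *\<^sub>R 0 + t *\<^sub>R x) \<le> (1 - t) * \<Phi> 0 + t * \<Phi> x"
    by (rule convex_onD[OF c]) (use assms in auto)
  thus ?thesis using orl_zero[OF assms(1)] by simp
qed
lemma orl_big: assumes "orlicz_function \<Phi>" shows "\<exists>U>0. \<forall>u\<ge>U. \<Phi> u > s"
proof -
  have "filterlim \<Phi> at_top at_top" using assms unfolding orlicz_function_def by auto
  hence "eventually (\<lambda>u. \<Phi> u > s) at_top" by (simp add: filterlim_at_top_dense)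
  then obtain U where "\<forall>u\<ge>U. \<Phi> u > s" by (auto simp: eventually_at_top_linorder)
  thus ?thesis by (intro exI[of _ "max 1 U"]) auto
qed

lemma delta2_iter:
  assumes o: "orlicz_function \<Phi>" and d: "delta2 \<Phi>"
  shows "\<exists>A K. \<forall>u\<ge>0. \<Phi> (2^m * u) \<le> A * \<Phi> u + K"
proof -
  have "Limsup at_top (\<lambda>u. ereal (\<Phi> (2 * u) / \<Phi> u)) < \<infinity>" using d unfolding delta2_def .
  hence "Limsup at_top (\<lambda>u. ereal (\<Phi> (2 * u) / \<Phi> u)) \<noteq> \<infinity>" by simp
  then obtain n :: nat where "Limsup at_top (\<lambda>u. ereal (\<Phi> (2 * u) / \<Phi> u)) < ereal (real n)"
    unfolding less_PInf_Ex_of_nat by (elim exE)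
  from Limsup_lessD[OF this] obtain U where U: "\<And>u. u \<ge> U \<Longrightarrow> \<Phi> (2 * u) / \<Phi> u < real n"
    by (auto simp: eventually_at_top_linorder)
  define U' where "U' = max U 1"
  have B: "\<Phi> (2*u) \<le> real n * \<Phi> u + \<Phi> (2*U')" if "u \<ge> 0" for u
  proof (cases "u \<ge> U'")
    case True
    hence "\<Phi> u > 0" using orl_pos[OF o] unfolding U'_def by auto
    moreover have "\<Phi> (2 * u) / \<Phi> u < real n" using U True unfolding U'_def by auto
    ultimately have "\<Phi> (2*u) \<le> real n * \<Phi> u" by (simp add: divide_less_eq)
    thus ?thesis using orl_nonneg[OF o, of "2*U'"] by linarith
  next
    case False
    hence "\<Phi> (2*u) \<le> \<Phi> (2*U')" using that by (intro orl_mono[OF o]) auto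
    thus ?thesis using orl_nonneg[OF o, of u] by (simp add: add_increasing)
  qed
  show ?thesis
  proof (induction m)
    case 0
    show ?case by (intro exI[of _ 1] exI[of _ 0]) simp
  next
    case (Suc m)
    then obtain A K where AK: "\<And>u. u\<ge>0 \<Longrightarrow> \<Phi> (2^m * u) \<le> A * \<Phi> u + K" by blast
    have "\<Phi> (2^Suc m * u) \<le> (real n * A) * \<Phi> u + (real n * K + \<Phi> (2*U'))" if "u \<ge> 0" for u
    proof -
      have "\<Phi> (2^Suc m * u) = \<Phi> (2 * (2^m*u))" by (simp add: mult.assoc)
      also have "\<dots> \<le> real n * \<Phi> (2^m*u) + \<Phi> (2*U')" using B[of "2^m*u"] that by simp
      also have "\<dots> \<le> real n * (A * \<Phi> u + K) + \<Phi> (2*U')"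
        using AK[OF that] by (intro add_right_mono mult_left_mono) auto
      finally show ?thesis by (simp add: algebra_simps)
    qed
    thus ?case by blast
  qed
qed


lemma orlicz_norm_div:
  assumes c: "c > 0"
  shows "orlicz_norm M \<Phi> (\<lambda>\<omega>. f \<omega> / c) = ereal (1/c) * orlicz_norm M \<Phi> f"
proof -
  define A where "A = {k. k > 0 \<and> (\<integral>\<^sup>+ \<omega>. ennreal (\<Phi> (f \<omega> / k)) \<partial>M) \<le> 1}"
  have eq: "{k. k > 0 \<and> (\<integral>\<^sup>+ \<omega>. ennreal (\<Phi> (f \<omega> / c / k)) \<partial>M) \<le> 1} = (\<lambda>k. (1/c)*k) ` A"
  proof (intro equalityI subsetI)
    fix k assume "k \<in> {k. k > 0 \<and> (\<integral>\<^sup>+ \<omega>. ennreal (\<Phi> (f \<omega> / c / k)) \<partial>M) \<le> 1}"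
    hence k: "k > 0" "(\<integral>\<^sup>+ \<omega>. ennreal (\<Phi> (f \<omega> / (c * k))) \<partial>M) \<le> 1" by (auto simp: divide_divide_eq_left)
    hence "c * k \<in> A" unfolding A_def using c by auto
    moreover have "k = (1/c) * (c*k)" using c by simp
    ultimately show "k \<in> (\<lambda>k. (1/c)*k) ` A" by blast
  next
    fix k assume "k \<in> (\<lambda>k. (1/c)*k) ` A"
    then obtain j where j: "j \<in> A" "k = (1/c)*j" by blast
    have "f \<omega> / c / k = f \<omega> / j" for \<omega> using j c by (auto simp: A_def)
    thus "k \<in> {k. k > 0 \<and> (\<integral>\<^sup>+ \<omega>. ennreal (\<Phi> (f \<omega> / c / k)) \<partial>M) \<le> 1}"
      using j c by (auto simp: A_def)
  qed
  have eq2: "ereal ` ((\<lambda>k. (1/c)*k) ` A) = {ereal (1/c) * x | x. x \<in> ereal ` A}"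
  proof (intro equalityI subsetI)
    fix y assume "y \<in> ereal ` ((\<lambda>k. (1/c)*k) ` A)"
    then obtain k where "k \<in> A" "y = ereal ((1/c)*k)" by blast
    thus "y \<in> {ereal (1/c) * x | x. x \<in> ereal ` A}" by (intro CollectI exI[of _ "ereal k"]) auto
  qed auto
  have "orlicz_norm M \<Phi> (\<lambda>\<omega>. f \<omega> / c) = Inf (ereal ` ((\<lambda>k. (1/c)*k) ` A))"
    unfolding orlicz_norm_def eq ..
  also have "\<dots> = ereal (1/c) * Inf {x. x \<in> ereal ` A}"
    unfolding eq2 by (rule ereal_Inf_cmult) (use c in simp)
  also have "\<dots> = ereal (1/c) * orlicz_norm M \<Phi> f" unfolding orlicz_norm_def A_def by simp
  finally show ?thesis .
qed


lemma modular_finite: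
  assumes o: "orlicz_function \<Phi>" and d: "delta2 \<Phi>" and P: "prob_space M"
    and Zm: "Z \<in> borel_measurable M" and Zn: "\<And>\<omega>. \<omega> \<in> space M \<Longrightarrow> Z \<omega> \<ge> 0"
    and k: "k > 0" and Zk: "(\<integral>\<^sup>+ \<omega>. ennreal (\<Phi> (Z \<omega> / k)) \<partial>M) \<le> 1" and c: "c \<ge> 0"
  shows "(\<integral>\<^sup>+ \<omega>. ennreal (\<Phi> (c * Z \<omega>)) \<partial>M) < \<infinity>"
proof -
  interpret prob_space M by (rule P)
  obtain m :: nat where m: "c * k < 2^m" using real_arch_pow[of 2 "c*k"] by auto
  obtain A K where AK: "\<And>u. u\<ge>0 \<Longrightarrow> \<Phi> (2^m * u) \<le> A * \<Phi> u + K"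
    using delta2_iter[OF o d, of m] by blast
  have pt: "ennreal (\<Phi> (c * Z \<omega>)) \<le> ennreal \<bar>A\<bar> * ennreal (\<Phi> (Z \<omega> / k)) + ennreal \<bar>K\<bar>"
    if "\<omega> \<in> space M" for \<omega>
  proof -
    have z: "Z \<omega> \<ge> 0" using Zn that .
    have "c * Z \<omega> = (c*k) * (Z \<omega> / k)" using k by simp
    also have "\<dots> \<le> 2^m * (Z \<omega> / k)" using m z k by (intro mult_right_mono) auto
    finally have "\<Phi> (c * Z \<omega>) \<le> \<Phi> (2^m * (Z \<omega> / k))"
      using z c k by (intro orl_mono[OF o]) auto
    also have "\<dots> \<le> A * \<Phi> (Z \<omega> / k) + K" using AK[of "Z \<omega> / k"] z k by simp
    also have "\<dots> \<le> \<bar>A\<bar> * \<Phi> (Z \<omega> / k) + \<bar>K\<bar>"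
      using orl_nonneg[OF o, of "Z \<omega> / k"] by (intro add_mono mult_right_mono) auto
    finally have "\<Phi> (c * Z \<omega>) \<le> \<bar>A\<bar> * \<Phi> (Z \<omega> / k) + \<bar>K\<bar>" .
    hence "ennreal (\<Phi> (c * Z \<omega>)) \<le> ennreal (\<bar>A\<bar> * \<Phi> (Z \<omega> / k) + \<bar>K\<bar>)"
      by (rule ennreal_leI)
    also have "\<dots> = ennreal \<bar>A\<bar> * ennreal (\<Phi> (Z \<omega> / k)) + ennreal \<bar>K\<bar>"
      using orl_nonneg[OF o, of "Z \<omega> / k"] by (simp add: ennreal_plus ennreal_mult)
    finally show ?thesis .
  qed
  have "(\<integral>\<^sup>+ \<omega>. ennreal (\<Phi> (c * Z \<omega>)) \<partial>M)
      \<le> (\<integral>\<^sup>+ \<omega>. ennreal \<bar>A\<bar> * ennreal (\<Phi> (Z \<omega> / k)) + ennreal \<bar>K\<bar> \<partial>M)"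
    by (rule nn_integral_mono) (rule pt)
  also have "\<dots> = ennreal \<bar>A\<bar> * (\<integral>\<^sup>+ \<omega>. ennreal (\<Phi> (Z \<omega> / k)) \<partial>M) + ennreal \<bar>K\<bar>"
  proof -
    have [measurable]: "Z \<in> borel_measurable M" by (rule Zm)
    have [measurable]: "(\<lambda>\<omega>. \<Phi> (Z \<omega> / k)) \<in> borel_measurable M" by (rule orl_meas[OF o]) measurable
    show ?thesis by (subst nn_integral_add) (auto simp: nn_integral_cmult emeasure_space_1)
  qed
  also have "\<dots> \<le> ennreal \<bar>A\<bar> * 1 + ennreal \<bar>K\<bar>"
    by (intro add_mono mult_left_mono Zk) auto
  also have "\<dots> < \<infinity>" by (simp add: ennreal_mult_less_top)
  finally show ?thesis .
qed




lemma g_exists: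
  fixes \<rho> :: "nat \<Rightarrow> real"
  assumes pos: "\<And>n. \<rho> n > 0" and lim: "\<rho> \<longlonglongrightarrow> 0"
  shows "\<exists>g::real\<Rightarrow>real. continuous_on UNIV g \<and> strict_mono_on {0..} g \<and> g 0 = 0 \<and> (\<forall>\<delta>\<ge>0. g \<delta> \<ge> 0) \<and>
     (\<forall>\<delta>>0. g \<delta> \<ge> 1 \<or> (\<exists>j. 2*\<delta> \<le> \<rho> j \<and> g \<delta> \<ge> (1/2)^(Suc j)))"
proof -
  define f where "f = (\<lambda>n (\<delta>::real). (1/2::real)^n * min 1 (max 0 (2*\<delta>/\<rho> n)))"
  define g where "g = (\<lambda>\<delta>. \<delta> + suminf (\<lambda>n. f n \<delta>))"
  have fb: "norm (f n \<delta>) \<le> (1/2)^n" for n \<delta> unfolding f_def by (auto simp: abs_mult)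
  have sumM: "summable (\<lambda>n. (1/2::real)^n)" by simp
  have summ: "summable (\<lambda>n. f n \<delta>)" for \<delta>
    by (rule summable_comparison_test'[OF sumM, of 0]) (use fb in auto)
  have fnn: "f n \<delta> \<ge> 0" for n \<delta> unfolding f_def by auto
  have fmono: "\<delta>1 \<le> \<delta>2 \<Longrightarrow> f n \<delta>1 \<le> f n \<delta>2" for n \<delta>1 \<delta>2
    unfolding f_def using pos[of n]
    by (intro mult_left_mono min.mono max.mono divide_right_mono) auto
  have ul: "uniform_limit UNIV (\<lambda>n x. \<Sum>i<n. f i x) (\<lambda>x. suminf (\<lambda>i. f i x)) sequentially"
    by (rule Weierstrass_m_test[OF _ sumM]) (use fb in auto)
  have fc: "continuous_on UNIV (f n)" for n
    unfolding f_def using pos[of n] by (intro continuous_intros) auto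
  have "continuous_on UNIV (\<lambda>x. suminf (\<lambda>i. f i x))"
    by (rule uniform_limit_theorem[OF _ ul]) (auto intro!: always_eventually continuous_on_sum fc)
  hence c: "continuous_on UNIV g" unfolding g_def by (intro continuous_intros)
  have sm: "strict_mono_on {0..} g"
  proof (rule strict_mono_onI)
    fix a b :: real assume "a < b"
    have "suminf (\<lambda>n. f n a) \<le> suminf (\<lambda>n. f n b)"
      by (rule suminf_le[OF _ summ summ]) (use fmono \<open>a<b\<close> in auto)
    thus "g a < g b" unfolding g_def using \<open>a<b\<close> by linarith
  qed
  have g0: "g 0 = 0" unfolding g_def f_def by simp
  have gnn: "\<forall>\<delta>\<ge>0. g \<delta> \<ge> 0" unfolding g_def using suminf_nonneg[OF summ fnn] by (simp add: add_nonneg_nonneg)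
  have fterm: "f n \<delta> \<le> g \<delta>" if "\<delta> \<ge> 0" for n \<delta>
  proof -
    have "f n \<delta> \<le> suminf (\<lambda>n. f n \<delta>)"
      proof -
      have "(\<Sum>i\<in>{n}. f i \<delta>) \<le> suminf (\<lambda>n. f n \<delta>)"
        by (rule sum_le_suminf[OF summ]) (simp_all add: fnn)
      thus ?thesis by simp
    qed
    thus ?thesis unfolding g_def using that by linarith
  qed
  have main: "g \<delta> \<ge> 1 \<or> (\<exists>j. 2*\<delta> \<le> \<rho> j \<and> g \<delta> \<ge> (1/2)^(Suc j))" if "\<delta> > 0" for \<delta>
  proof -
    have "eventually (\<lambda>n. \<rho> n < 2*\<delta>) sequentially"
      using order_tendstoD(2)[OF lim, of "2*\<delta>"] \<open>\<delta>>0\<close> by simp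
    hence ex: "\<exists>n. \<rho> n < 2*\<delta>" by (auto simp: eventually_sequentially)
    define n where "n = (LEAST n. \<rho> n < 2*\<delta>)"
    have n1: "\<rho> n < 2*\<delta>" unfolding n_def using ex by (rule LeastI_ex)
    have n2: "\<not> \<rho> m < 2*\<delta>" if "m < n" for m using not_less_Least[OF that[unfolded n_def]] .
    have fn: "f n \<delta> = (1/2)^n" unfolding f_def using n1 pos[of n] \<open>\<delta>>0\<close> by simp
    have gn: "(1/2)^n \<le> g \<delta>" using fterm[of \<delta> n] fn \<open>\<delta>>0\<close> by simp
    show ?thesis
    proof (cases n)
      case 0 then show ?thesis using gn by simp
    next
      case (Suc j)
      then have "2*\<delta> \<le> \<rho> j" using n2[of j] by simp
      then show ?thesis using gn Suc by blast
    qed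
  qed
  show ?thesis using c sm g0 gnn main by blast
qed


theorem theorem3p1:
  fixes X :: "'a::metric_space set" and M :: "'b measure"
    and \<xi> :: "'a \<Rightarrow> 'b \<Rightarrow> real" and \<Phi> :: "real \<Rightarrow> real"
  assumes "compact X" and "X \<noteq> {}"
    and "prob_space M"
    and "\<And>x. x \<in> X \<Longrightarrow> \<xi> x \<in> borel_measurable M"
    and "separable_field M X \<xi>"
    and "AE \<omega> in M. continuous_on X (\<lambda>x. \<xi> x \<omega>)"
    and "orlicz_function \<Phi>" and "delta2 \<Phi>"
    and "orlicz_norm M \<Phi> (\<lambda>\<omega>. SUP x\<in>X. \<bar>\<xi> x \<omega>\<bar>) < \<infinity>"
  shows "\<exists>\<tau>0 g. \<tau>0 \<in> borel_measurable M \<and> (\<forall>\<omega>\<in>space M. \<tau>0 \<omega> \<ge> 0) \<and>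
            orlicz_norm M \<Phi> \<tau>0 = 1 \<and>
            continuous_on {0..diameter X} g \<and> strict_mono_on {0..diameter X} g \<and>
            (\<forall>\<delta>\<in>{0..diameter X}. g \<delta> \<ge> 0) \<and> g 0 = 0 \<and>
            (g \<longlongrightarrow> 0) (at 0 within {0<..diameter X}) \<and>
            (AE \<omega> in M. \<forall>\<delta>\<in>{0..diameter X}.
                modulus_cont X (\<lambda>x. \<xi> x \<omega>) \<delta> \<le> \<tau>0 \<omega> * g \<delta>)"
proof -
  interpret P: prob_space M by fact
  note o = assms(7) and d = assms(8)
  obtain S N where S: "countable S" "S \<subseteq> X" and N: "N \<in> null_sets M"
    and sep: "\<And>\<omega> x. \<omega> \<in> space M - N \<Longrightarrow> x \<in> X \<Longrightarrow> \<exists>s. (\<forall>n. s n \<in> S) \<and> s \<longlonglongrightarrow> x \<and>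
              (\<lambda>n. \<xi> (s n) \<omega>) \<longlonglongrightarrow> \<xi> x \<omega>"
    using assms(5) unfolding separable_field_def by blast
  have "space M - N \<noteq> {}"
  proof
    assume "space M - N = {}"
    hence "space M \<subseteq> N" by blast
    hence "emeasure M (space M) \<le> emeasure M N" using N by (intro emeasure_mono) auto
    thus False using null_setsD1[OF N] P.emeasure_space_1 by simp
  qed
  then obtain \<omega>0 where \<omega>0: "\<omega>0 \<in> space M - N" by blast
  have Xcl: "X \<subseteq> closure S"
  proof
    fix x assume "x \<in> X"
    from sep[OF \<omega>0 this] obtain s where "\<forall>n. s n \<in> S" "s \<longlonglongrightarrow> x" by blast
    thus "x \<in> closure S" unfolding closure_sequential by blast
  qed
  have Sne: "S \<noteq> {}" using Xcl assms(2) by auto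
  then obtain s0 where s0: "s0 \<in> S" by blast
  obtain N' where N': "{\<omega>\<in>space M. \<not> continuous_on X (\<lambda>x. \<xi> x \<omega>)} \<subseteq> N'" "emeasure M N' = 0" "N' \<in> sets M"
    using assms(6) by (rule AE_E)
  define G where "G = space M - N'"
  have Gs: "G \<in> sets M" unfolding G_def using N' by auto
  have GAE: "AE \<omega> in M. \<omega> \<in> G" unfolding G_def using N' by (intro AE_I'[of N']) auto
  have Gsp: "\<omega> \<in> G \<Longrightarrow> \<omega> \<in> space M" for \<omega> unfolding G_def by auto
  have cont: "\<omega> \<in> G \<Longrightarrow> continuous_on X (\<lambda>x. \<xi> x \<omega>)" for \<omega> using N' unfolding G_def by auto
  have bnd: "\<exists>B. \<forall>x\<in>X. \<bar>\<xi> x \<omega>\<bar> \<le> B" if "\<omega> \<in> G" for \<omega>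
  proof -
    have "compact ((\<lambda>x. \<xi> x \<omega>) ` X)" by (rule compact_continuous_image[OF cont[OF that] assms(1)])
    hence "bounded ((\<lambda>x. \<xi> x \<omega>) ` X)" by (rule compact_imp_bounded)
    thus ?thesis unfolding bounded_iff by auto
  qed
  define Pr where "Pr r = {p \<in> S \<times> S. dist (fst p) (snd p) < r}" for r :: real
  define h where "h p \<omega> = (if \<omega> \<in> G then \<bar>\<xi> (fst p) \<omega> - \<xi> (snd p) \<omega>\<bar> else 0)" for p \<omega>
  define W where "W r \<omega> = (SUP p\<in>Pr r. h p \<omega>)" for r \<omega>
  define Z where "Z \<omega> = (SUP s\<in>S. if \<omega> \<in> G then \<bar>\<xi> s \<omega>\<bar> else 0)" for \<omega>
  have PrS: "Pr r \<subseteq> S \<times> S" for r unfolding Pr_def by auto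
  have Prc: "countable (Pr r)" for r using countable_subset[OF PrS] S(1) by auto
  have Prne: "r > 0 \<Longrightarrow> (s0, s0) \<in> Pr r" for r unfolding Pr_def using s0 by auto
  have hbdd: "\<exists>B. \<forall>p\<in>S\<times>S. h p \<omega> \<le> B" for \<omega>
  proof (cases "\<omega> \<in> G")
    case True
    then obtain B where B: "\<forall>x\<in>X. \<bar>\<xi> x \<omega>\<bar> \<le> B" using bnd by blast
    have "h p \<omega> \<le> 2*B" if "p \<in> S \<times> S" for p
    proof -
      have "\<bar>\<xi> (fst p) \<omega>\<bar> \<le> B" "\<bar>\<xi> (snd p) \<omega>\<bar> \<le> B" using B that S(2) by auto
      thus ?thesis unfolding h_def using True by auto
    qed
    thus ?thesis by blast
  next
    case False thus ?thesis unfolding h_def by auto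
  qed
  have hbdd': "bdd_above ((\<lambda>p. h p \<omega>) ` Pr r)" for \<omega> r
    using hbdd[of \<omega>] PrS[of r] unfolding bdd_above_def by blast
  have zbdd: "bdd_above ((\<lambda>s. if \<omega> \<in> G then \<bar>\<xi> s \<omega>\<bar> else 0) ` S)" for \<omega>
  proof (cases "\<omega> \<in> G")
    case True
    then obtain B where B: "\<forall>x\<in>X. \<bar>\<xi> x \<omega>\<bar> \<le> B" using bnd by blast
    thus ?thesis using True S(2) unfolding bdd_above_def by (intro exI[of _ B]) auto
  next
    case False thus ?thesis by auto
  qed
  have hn: "h p \<omega> \<ge> 0" for p \<omega> unfolding h_def by auto
  have Zn: "Z \<omega> \<ge> 0" for \<omega>
  proof -
    have "(if \<omega> \<in> G then \<bar>\<xi> s0 \<omega>\<bar> else 0) \<le> Z \<omega>" unfolding Z_def by (rule cSUP_upper[OF s0 zbdd])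
    thus ?thesis by (auto split: if_splits)
  qed
  have Z0: "\<omega> \<notin> G \<Longrightarrow> Z \<omega> = 0" for \<omega> unfolding Z_def using Sne by simp
  have Wn: "W r \<omega> \<ge> 0" if "r > 0" for r \<omega>
    unfolding W_def using cSUP_upper[OF Prne[OF that] hbdd'[of \<omega> r]] hn[of "(s0,s0)" \<omega>] by auto
  have W2Z: "W r \<omega> \<le> 2 * Z \<omega>" if "r > 0" for r \<omega>
    unfolding W_def
  proof (rule cSUP_least)
    show "Pr r \<noteq> {}" using Prne[OF that] by blast
    fix p assume p: "p \<in> Pr r"
    hence ps: "fst p \<in> S" "snd p \<in> S" using PrS[of r] by auto
    have "(if \<omega> \<in> G then \<bar>\<xi> (fst p) \<omega>\<bar> else 0) \<le> Z \<omega>" "(if \<omega> \<in> G then \<bar>\<xi> (snd p) \<omega>\<bar> else 0) \<le> Z \<omega>"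
      unfolding Z_def by (rule cSUP_upper[OF ps(1) zbdd], rule cSUP_upper[OF ps(2) zbdd])
    thus "h p \<omega> \<le> 2 * Z \<omega>" unfolding h_def using Zn[of \<omega>] by (auto split: if_splits)
  qed
  have Wmono: "W r1 \<omega> \<le> W r2 \<omega>" if "0 < r1" "r1 \<le> r2" for r1 r2 \<omega>
    unfolding W_def
    by (rule cSUP_subset_mono) (use Prne[OF that(1)] hbdd' that in \<open>force simp: Pr_def\<close>)+
  have Wm: "W r \<in> borel_measurable M" for r
    unfolding W_def
  proof (rule borel_measurable_cSUP[OF Prc])
    fix p assume "p \<in> Pr r"
    hence "p \<in> S \<times> S" using PrS[of r] by blast
    hence "fst p \<in> X \<and> snd p \<in> X" using S(2) by (cases p) auto
    hence "fst p \<in> X" "snd p \<in> X" by auto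
    hence [measurable]: "\<xi> (fst p) \<in> borel_measurable M" "\<xi> (snd p) \<in> borel_measurable M" using assms(4) by auto
    have [measurable]: "G \<in> sets M" by (rule Gs)
    show "h p \<in> borel_measurable M" unfolding h_def by measurable
  qed (rule hbdd')
  have Zm: "Z \<in> borel_measurable M"
    unfolding Z_def
  proof (rule borel_measurable_cSUP[OF S(1)])
    fix s assume "s \<in> S"
    hence [measurable]: "\<xi> s \<in> borel_measurable M" using assms(4) S(2) by auto
    have [measurable]: "G \<in> sets M" by (rule Gs)
    show "(\<lambda>\<omega>. if \<omega> \<in> G then \<bar>\<xi> s \<omega>\<bar> else 0) \<in> borel_measurable M" by measurable
  qed (rule zbdd)
  have ZX: "Z \<omega> \<le> (SUP x\<in>X. \<bar>\<xi> x \<omega>\<bar>)" if w: "\<omega> \<in> G" for \<omega>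
  proof -
    obtain B where B: "\<forall>x\<in>X. \<bar>\<xi> x \<omega>\<bar> \<le> B" using bnd[OF w] by blast
    have "bdd_above ((\<lambda>x. \<bar>\<xi> x \<omega>\<bar>) ` X)" using B unfolding bdd_above_def by blast
    then show ?thesis unfolding Z_def using w Sne S(2)
      by (intro cSUP_subset_mono) auto
  qed
  have Wsmall: "\<exists>r>0. W r \<omega> \<le> e" if w: "\<omega> \<in> G" and e: "e > 0" for \<omega> e
  proof -
    have "uniformly_continuous_on X (\<lambda>x. \<xi> x \<omega>)"
      by (rule compact_uniformly_continuous[OF cont[OF w] assms(1)])
    then obtain r where r: "r > 0" "\<And>a b. a \<in> X \<Longrightarrow> b \<in> X \<Longrightarrow> dist a b < r \<Longrightarrow> dist (\<xi> a \<omega>) (\<xi> b \<omega>) < e"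
      unfolding uniformly_continuous_on_def using e by metis
    have "W r \<omega> \<le> e" unfolding W_def
    proof (rule cSUP_least)
      show "Pr r \<noteq> {}" using Prne[OF r(1)] by blast
      fix p assume "p \<in> Pr r"
      hence p: "fst p \<in> X" "snd p \<in> X" "dist (fst p) (snd p) < r" unfolding Pr_def using S(2) by auto
      show "h p \<omega> \<le> e" using r(2)[OF p] w unfolding h_def dist_real_def by simp
    qed
    thus ?thesis using r(1) by blast
  qed
  have modW: "modulus_cont X (\<lambda>x. \<xi> x \<omega>) \<delta> \<le> W (2*\<delta>) \<omega>" if w: "\<omega> \<in> G" and dl: "\<delta> > 0" for \<omega> \<delta>
    unfolding modulus_cont_def
  proof (rule cSUP_least)
    obtain x0 where "x0 \<in> X" using assms(2) by blast
    thus "{(x, y). x \<in> X \<and> y \<in> X \<and> dist x y \<le> \<delta>} \<noteq> {}" using dl by (auto intro!: exI[of _ x0])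
    fix p assume "p \<in> {(x, y). x \<in> X \<and> y \<in> X \<and> dist x y \<le> \<delta>}"
    then obtain x y where p: "p = (x,y)" "x \<in> X" "y \<in> X" "dist x y \<le> \<delta>" by blast
    have "\<bar>\<xi> x \<omega> - \<xi> y \<omega>\<bar> \<le> W (2*\<delta>) \<omega>"
    proof (rule field_le_epsilon)
      fix e :: real assume e: "e > 0"
      have "uniformly_continuous_on X (\<lambda>x. \<xi> x \<omega>)"
        by (rule compact_uniformly_continuous[OF cont[OF w] assms(1)])
      then obtain r where r: "r > 0" "\<And>a b. a \<in> X \<Longrightarrow> b \<in> X \<Longrightarrow> dist a b < r \<Longrightarrow> dist (\<xi> a \<omega>) (\<xi> b \<omega>) < e/2"
        unfolding uniformly_continuous_on_def using e by (metis half_gt_zero)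
      have mr: "min r (\<delta>/2) > 0" using r(1) dl by auto
      obtain s where s: "s \<in> S" "dist s x < min r (\<delta>/2)"
        using closure_approachable[THEN iffD1, OF subsetD[OF Xcl p(2)]] mr by blast
      obtain t where t: "t \<in> S" "dist t y < min r (\<delta>/2)"
        using closure_approachable[THEN iffD1, OF subsetD[OF Xcl p(3)]] mr by blast
      have sX: "s \<in> X" "t \<in> X" using s t S(2) by auto
      have "dist s t \<le> dist s x + dist x y + dist y t" using dist_triangle[of s t x] dist_triangle[of x t y] by linarith
      also have "\<dots> < 2*\<delta>" using s t p(4) by (simp add: dist_commute)
      finally have "(s,t) \<in> Pr (2*\<delta>)" unfolding Pr_def using s t by auto
      hence st: "h (s,t) \<omega> \<le> W (2*\<delta>) \<omega>" unfolding W_def by (rule cSUP_upper[OF _ hbdd'])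
      have d1: "\<bar>\<xi> s \<omega> - \<xi> x \<omega>\<bar> < e/2" using r(2)[OF sX(1) p(2)] s(2) by (simp add: dist_real_def)
      have d2: "\<bar>\<xi> t \<omega> - \<xi> y \<omega>\<bar> < e/2" using r(2)[OF sX(2) p(3)] t(2) by (simp add: dist_real_def)
      have st': "\<bar>\<xi> s \<omega> - \<xi> t \<omega>\<bar> \<le> W (2*\<delta>) \<omega>" using st w unfolding h_def by simp
      show "\<bar>\<xi> x \<omega> - \<xi> y \<omega>\<bar> \<le> W (2*\<delta>) \<omega> + e" using st' d1 d2 by arith
    qed
    thus "\<bar>(\<lambda>x. \<xi> x \<omega>) (fst p) - (\<lambda>x. \<xi> x \<omega>) (snd p)\<bar> \<le> W (2*\<delta>) \<omega>" using p by simp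
  qed
  have mod0: "modulus_cont X f 0 = 0" for f :: "'a \<Rightarrow> real"
  proof -
    obtain x0 where "x0 \<in> X" using assms(2) by blast
    hence "(\<lambda>p. \<bar>f (fst p) - f (snd p)\<bar>) ` {(x, y). x \<in> X \<and> y \<in> X \<and> dist x y \<le> 0} = {0}"
      by force
    thus ?thesis unfolding modulus_cont_def by simp
  qed
  obtain k where k: "k > 0" "(\<integral>\<^sup>+ \<omega>. ennreal (\<Phi> ((SUP x\<in>X. \<bar>\<xi> x \<omega>\<bar>) / k)) \<partial>M) \<le> 1"
  proof -
    let ?A = "{k. k > 0 \<and> (\<integral>\<^sup>+ \<omega>. ennreal (\<Phi> ((SUP x\<in>X. \<bar>\<xi> x \<omega>\<bar>) / k)) \<partial>M) \<le> 1}"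
    have "?A \<noteq> {}"
    proof
      assume "?A = {}"
      hence "orlicz_norm M \<Phi> (\<lambda>\<omega>. SUP x\<in>X. \<bar>\<xi> x \<omega>\<bar>) = \<infinity>" unfolding orlicz_norm_def
        by (simp only: image_empty Inf_empty top_ereal_def)
      thus False using assms(9) by simp
    qed
    thus thesis using that by blast
  qed
  have Zk: "(\<integral>\<^sup>+ \<omega>. ennreal (\<Phi> (Z \<omega> / k)) \<partial>M) \<le> 1"
  proof -
    have "(\<integral>\<^sup>+ \<omega>. ennreal (\<Phi> (Z \<omega> / k)) \<partial>M) \<le> (\<integral>\<^sup>+ \<omega>. ennreal (\<Phi> ((SUP x\<in>X. \<bar>\<xi> x \<omega>\<bar>) / k)) \<partial>M)"
    proof (rule nn_integral_mono)
      fix \<omega> assume "\<omega> \<in> space M"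
      show "ennreal (\<Phi> (Z \<omega> / k)) \<le> ennreal (\<Phi> ((SUP x\<in>X. \<bar>\<xi> x \<omega>\<bar>) / k))"
      proof (cases "\<omega> \<in> G")
        case True
        have "\<Phi> (Z \<omega> / k) \<le> \<Phi> ((SUP x\<in>X. \<bar>\<xi> x \<omega>\<bar>) / k)"
          using ZX[OF True] Zn[of \<omega>] k(1) by (intro orl_mono[OF o] divide_right_mono) auto
        thus ?thesis by (rule ennreal_leI)
      qed (simp add: Z0 orl_zero[OF o])
    qed
    thus ?thesis using k(2) by simp
  qed
  have Zfin: "(\<integral>\<^sup>+ \<omega>. ennreal (\<Phi> (c * Z \<omega>)) \<partial>M) < \<infinity>" if "c \<ge> 0" for c
    by (rule modular_finite[OF o d assms(3) Zm Zn k(1) Zk that])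
  have Wzero: "W r \<omega> = 0" if "\<omega> \<notin> G" "r > 0" for r \<omega>
  proof -
    have "W r \<omega> = (SUP p\<in>Pr r. 0::real)" unfolding W_def h_def using that(1) by simp
    moreover have "Pr r \<noteq> {}" using Prne[OF that(2)] by blast
    ultimately show ?thesis by simp
  qed
  have Wlim: "(\<lambda>m. W (inverse (real (Suc m))) \<omega>) \<longlonglongrightarrow> 0" for \<omega>
  proof (cases "\<omega> \<in> G")
    case False
    thus ?thesis using Wzero[OF False] by simp
  next
    case True
    show ?thesis
    proof (rule order_tendstoI)
      fix a :: real assume "a < 0"
      thus "eventually (\<lambda>m. a < W (inverse (real (Suc m))) \<omega>) sequentially"
        using Wn by (intro always_eventually allI) (smt (verit) of_nat_0_less_iff positive_imp_inverse_positive zero_less_Suc)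
    next
      fix a :: real assume a: "a > 0"
      obtain r where r: "r > 0" "W r \<omega> \<le> a/2" using Wsmall[OF True, of "a/2"] a by auto
      have "eventually (\<lambda>m. inverse (real (Suc m)) < r) sequentially"
        using order_tendstoD(2)[OF LIMSEQ_inverse_real_of_nat r(1)] .
      thus "eventually (\<lambda>m. W (inverse (real (Suc m))) \<omega> < a) sequentially"
      proof (rule eventually_mono)
        fix m assume "inverse (real (Suc m)) < r"
        hence "W (inverse (real (Suc m))) \<omega> \<le> W r \<omega>" by (intro Wmono) auto
        thus "W (inverse (real (Suc m))) \<omega> < a" using r a by linarith
      qed
    qed
  qed
  have Phim: "(\<lambda>\<omega>. ennreal (\<Phi> (c * W r \<omega>))) \<in> borel_measurable M" for c r
  proof -
    have [measurable]: "W r \<in> borel_measurable M" by (rule Wm)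
    have "(\<lambda>\<omega>. \<Phi> (c * W r \<omega>)) \<in> borel_measurable M" by (rule orl_meas[OF o]) measurable
    thus ?thesis by measurable
  qed
  have rsel: "\<exists>r>0. (\<integral>\<^sup>+ \<omega>. ennreal (\<Phi> (2^Suc n * W r \<omega>)) \<partial>M) < ennreal ((1/2)^Suc n)" for n
  proof -
    define f where "f m \<omega> = ennreal (\<Phi> (2^Suc n * W (inverse (real (Suc m))) \<omega>))" for m \<omega>
    have fm: "f m \<in> borel_measurable M" for m unfolding f_def by (rule Phim)
    have dec: "f (Suc m) \<omega> \<le> f m \<omega>" for m \<omega>
    proof -
      have "W (inverse (real (Suc (Suc m)))) \<omega> \<le> W (inverse (real (Suc m))) \<omega>"
        by (intro Wmono) (auto simp: field_simps)
      moreover have "W (inverse (real (Suc (Suc m)))) \<omega> \<ge> 0" by (intro Wn) auto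
      ultimately show ?thesis unfolding f_def
        by (intro ennreal_leI orl_mono[OF o]) auto
    qed
    have f0: "(\<integral>\<^sup>+ \<omega>. f 0 \<omega> \<partial>M) < \<infinity>"
    proof -
      have "(\<integral>\<^sup>+ \<omega>. f 0 \<omega> \<partial>M) \<le> (\<integral>\<^sup>+ \<omega>. ennreal (\<Phi> ((2^Suc n * 2) * Z \<omega>)) \<partial>M)"
      proof (rule nn_integral_mono)
        fix \<omega>
        have "W 1 \<omega> \<le> 2 * Z \<omega>" "W 1 \<omega> \<ge> 0" using W2Z[of 1 \<omega>] Wn[of 1 \<omega>] by auto
        thus "f 0 \<omega> \<le> ennreal (\<Phi> ((2^Suc n * 2) * Z \<omega>))" unfolding f_def
          by (intro ennreal_leI orl_mono[OF o]) auto
      qed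
      also have "\<dots> < \<infinity>" by (rule Zfin) simp
      finally show ?thesis .
    qed
    have INF0: "(INF m. f m \<omega>) = 0" for \<omega>
    proof -
      have "decseq (\<lambda>m. f m \<omega>)" using dec by (intro decseq_SucI) auto
      hence l1: "(\<lambda>m. f m \<omega>) \<longlonglongrightarrow> (INF m. f m \<omega>)" by (rule LIMSEQ_INF)
      have "(\<lambda>m. \<Phi> (2^Suc n * W (inverse (real (Suc m))) \<omega>)) \<longlonglongrightarrow> \<Phi> (2^Suc n * 0)"
        by (rule continuous_on_tendsto_compose[OF orl_cont[OF o]]) (use Wlim[of \<omega>] in \<open>auto intro!: tendsto_mult_right_zero\<close>)
      hence "(\<lambda>m. f m \<omega>) \<longlonglongrightarrow> ennreal 0" unfolding f_def using orl_zero[OF o]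
        by (intro tendsto_ennrealI) simp
      thus ?thesis using LIMSEQ_unique[OF l1] by simp
    qed
    have "(\<integral>\<^sup>+ \<omega>. (INF m. f m \<omega>) \<partial>M) = (INF m. integral\<^sup>N M (f m))"
      using f0 by (intro nn_integral_monotone_convergence_INF_AE') (simp_all add: dec fm)
    hence "(INF m. integral\<^sup>N M (f m)) = 0" using INF0 by simp
    hence "(INF m. integral\<^sup>N M (f m)) < ennreal ((1/2)^Suc n)" by simp
    then obtain m where "integral\<^sup>N M (f m) < ennreal ((1/2)^Suc n)" by (auto simp: INF_less_iff)
    thus ?thesis unfolding f_def by (intro exI[of _ "inverse (real (Suc m))"]) auto
  qed
  have "\<forall>n. \<exists>r. r > 0 \<and> (\<integral>\<^sup>+ \<omega>. ennreal (\<Phi> (2^Suc n * W r \<omega>)) \<partial>M) < ennreal ((1/2)^Suc n)"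
    using rsel by simp
  from choice[OF this] obtain r where r0: "\<forall>n. r n > 0 \<and> (\<integral>\<^sup>+ \<omega>. ennreal (\<Phi> (2^Suc n * W (r n) \<omega>)) \<partial>M) < ennreal ((1/2)^Suc n)"
    by (elim exE)
  have r: "\<And>n. r n > 0"
    "\<And>n. (\<integral>\<^sup>+ \<omega>. ennreal (\<Phi> (2^Suc n * W (r n) \<omega>)) \<partial>M) < ennreal ((1/2)^Suc n)" using r0 by simp_all
  define \<rho> where "\<rho> n = min (r n) (inverse (real (Suc n)))" for n
  have \<rho>pos: "\<rho> n > 0" for n unfolding \<rho>_def using r(1)[of n] by simp
  have \<rho>lim: "\<rho> \<longlonglongrightarrow> 0"
  proof (rule tendsto_sandwich[OF _ _ tendsto_const LIMSEQ_inverse_real_of_nat])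
    show "eventually (\<lambda>n. 0 \<le> \<rho> n) sequentially" using \<rho>pos by (intro always_eventually) (simp add: less_imp_le)
    show "eventually (\<lambda>n. \<rho> n \<le> inverse (real (Suc n))) sequentially" unfolding \<rho>_def by simp
  qed
  define a where "a n \<omega> = 2^Suc n * W (\<rho> n) \<omega>" for n \<omega>
  have an: "a n \<omega> \<ge> 0" for n \<omega> unfolding a_def using Wn[OF \<rho>pos] by simp
  have aint: "(\<integral>\<^sup>+ \<omega>. ennreal (\<Phi> (a n \<omega>)) \<partial>M) \<le> ennreal ((1/2)^Suc n)" for n
  proof -
    have "(\<integral>\<^sup>+ \<omega>. ennreal (\<Phi> (a n \<omega>)) \<partial>M) \<le> (\<integral>\<^sup>+ \<omega>. ennreal (\<Phi> (2^Suc n * W (r n) \<omega>)) \<partial>M)"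
    proof (rule nn_integral_mono)
      fix \<omega>
      have "W (\<rho> n) \<omega> \<le> W (r n) \<omega>" using \<rho>pos[of n] by (intro Wmono) (auto simp: \<rho>_def)
      thus "ennreal (\<Phi> (a n \<omega>)) \<le> ennreal (\<Phi> (2^Suc n * W (r n) \<omega>))" unfolding a_def
        using Wn[OF \<rho>pos, of n \<omega>] by (intro ennreal_leI orl_mono[OF o]) auto
    qed
    thus ?thesis using r(2)[of n] by simp
  qed
  have am: "(\<lambda>\<omega>. ennreal (\<Phi> (a n \<omega>))) \<in> borel_measurable M" for n unfolding a_def by (rule Phim)
  define Ss where "Ss \<omega> = (\<Sum>n. ennreal (\<Phi> (a n \<omega>)))" for \<omega>
  have Ssm[measurable]: "Ss \<in> borel_measurable M" unfolding Ss_def by (rule borel_measurable_suminf_order[OF am])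
  have Ssint: "(\<integral>\<^sup>+ \<omega>. Ss \<omega> \<partial>M) < \<infinity>"
  proof -
    have "(\<integral>\<^sup>+ \<omega>. Ss \<omega> \<partial>M) = (\<Sum>n. (\<integral>\<^sup>+ \<omega>. ennreal (\<Phi> (a n \<omega>)) \<partial>M))"
      unfolding Ss_def by (rule nn_integral_suminf[OF am])
    also have "\<dots> \<le> (\<Sum>n. ennreal ((1/2)^Suc n))" by (rule suminf_le[OF aint summableI summableI])
    also have "\<dots> < \<infinity>"
    proof -
      have "summable (\<lambda>n. (1/2::real)^Suc n)" unfolding power_Suc by (intro summable_mult summable_geometric) simp
      hence "(\<Sum>n. ennreal ((1/2)^Suc n)) \<noteq> top" by (rule ennreal_suminf_neq_top) simp
      thus ?thesis by (simp add: less_top[symmetric])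
    qed
    finally show ?thesis .
  qed
  have SsAE: "AE \<omega> in M. Ss \<omega> \<noteq> \<infinity>" using Ssint by (intro nn_integral_PInf_AE Ssm) simp
  define H where "H = {\<omega>\<in>space M. \<omega> \<in> G \<and> Ss \<omega> < \<infinity>}"
  have Hs[measurable]: "H \<in> sets M" unfolding H_def using Gs by measurable
  have HAE: "AE \<omega> in M. \<omega> \<in> H" using GAE SsAE
    by eventually_elim (auto simp: H_def Gsp top.not_eq_extremum)
  have HG: "\<omega> \<in> H \<Longrightarrow> \<omega> \<in> G" for \<omega> unfolding H_def by auto
  have aterm: "ennreal (\<Phi> (a n \<omega>)) \<le> Ss \<omega>" for n \<omega>
  proof -
    have "(\<Sum>i\<in>{n}. ennreal (\<Phi> (a i \<omega>))) \<le> Ss \<omega>" unfolding Ss_def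
      by (rule sum_le_suminf[OF summableI]) simp_all
    thus ?thesis by simp
  qed
  have Phisup: "\<Phi> (a n \<omega>) \<le> enn2real (Ss \<omega>)" if "\<omega> \<in> H" for n \<omega>
  proof -
    have "Ss \<omega> < top" using that unfolding H_def by simp
    then obtain s where s: "s \<ge> 0" "Ss \<omega> = ennreal s" unfolding less_top_ennreal by blast
    have "ennreal (\<Phi> (a n \<omega>)) \<le> ennreal s" using aterm[of n \<omega>] s(2) by simp
    hence "\<Phi> (a n \<omega>) \<le> s" using s(1) by simp
    thus ?thesis using s by simp
  qed
  have abnd: "\<exists>U. \<forall>n. a n \<omega> \<le> U" if "\<omega> \<in> H" for \<omega>
  proof -
    obtain U where U: "U > 0" "\<And>u. u \<ge> U \<Longrightarrow> \<Phi> u > enn2real (Ss \<omega>)"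
      using orl_big[OF o, of "enn2real (Ss \<omega>)"] by blast
    have "a n \<omega> \<le> U" for n
    proof (rule ccontr)
      assume "\<not> a n \<omega> \<le> U"
      hence "\<Phi> (a n \<omega>) > enn2real (Ss \<omega>)" using U(2)[of "a n \<omega>"] by simp
      thus False using Phisup[OF that, of n] by simp
    qed
    thus ?thesis by blast
  qed
  define b where "b n \<omega> = (if \<omega> \<in> H then a n \<omega> else 0)" for n \<omega>
  have bn: "b n \<omega> \<ge> 0" for n \<omega> unfolding b_def using an[of n \<omega>] by simp
  have bbdd: "bdd_above (range (\<lambda>n. b n \<omega>))" for \<omega>
  proof (cases "\<omega> \<in> H")
    case True
    then obtain U where "\<forall>n. a n \<omega> \<le> U" using abnd by blast
    thus ?thesis unfolding b_def bdd_above_def using True by (intro exI[of _ U]) auto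
  next
    case False
    thus ?thesis unfolding b_def by simp
  qed
  have bm: "b n \<in> borel_measurable M" for n
  proof -
    have [measurable]: "W (\<rho> n) \<in> borel_measurable M" by (rule Wm)
    show ?thesis unfolding b_def a_def by measurable
  qed
  define T where "T \<omega> = max (max 1 (2 * Z \<omega>)) (SUP n. b n \<omega>)" for \<omega>
  have Tm: "T \<in> borel_measurable M"
  proof -
    have [measurable]: "(\<lambda>\<omega>. SUP n. b n \<omega>) \<in> borel_measurable M"
      by (rule borel_measurable_cSUP) (simp_all add: bm bbdd)
    have [measurable]: "Z \<in> borel_measurable M" by (rule Zm)
    show ?thesis unfolding T_def by measurable
  qed
  have T1: "T \<omega> \<ge> 1" for \<omega> unfolding T_def by simp
  have TZ: "2 * Z \<omega> \<le> T \<omega>" for \<omega> unfolding T_def by simp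
  have Tb: "b n \<omega> \<le> T \<omega>" for n \<omega>
  proof -
    have "b n \<omega> \<le> (SUP n. b n \<omega>)" by (rule cSUP_upper[OF UNIV_I bbdd])
    thus ?thesis unfolding T_def by simp
  qed
  have PhiSup: "ennreal (\<Phi> (SUP n. b n \<omega>)) \<le> Ss \<omega>" for \<omega>
  proof (cases "\<omega> \<in> H")
    case False
    then have "(SUP n. b n \<omega>) = 0" unfolding b_def by simp
    thus ?thesis using orl_zero[OF o] by simp
  next
    case True
    define f where "f u = \<Phi> (max 0 u)" for u
    have fmono: "mono f" unfolding f_def mono_def by (intro allI impI orl_mono[OF o]) auto
    have fcont: "continuous_on UNIV f" unfolding f_def
      by (rule continuous_on_compose2[OF orl_cont[OF o]]) (auto intro!: continuous_intros)
    have fc: "continuous (at_left (Sup (range (\<lambda>n. b n \<omega>)))) f"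
    proof -
      have "isCont f x" for x using fcont continuous_on_eq_continuous_at[OF open_UNIV] by blast
      thus ?thesis by (rule continuous_at_imp_continuous_at_within)
    qed
    have eq: "f (Sup (range (\<lambda>n. b n \<omega>))) = (SUP s\<in>range (\<lambda>n. b n \<omega>). f s)"
      by (rule continuous_at_Sup_mono[OF fmono fc _ bbdd]) simp
    have "(SUP s\<in>range (\<lambda>n. b n \<omega>). f s) \<le> enn2real (Ss \<omega>)"
    proof (rule cSUP_least)
      show "range (\<lambda>n. b n \<omega>) \<noteq> {}" by simp
      fix x assume "x \<in> range (\<lambda>n. b n \<omega>)"
      then obtain n where "x = b n \<omega>" by blast
      thus "f x \<le> enn2real (Ss \<omega>)" unfolding f_def b_def using True an[of n \<omega>] Phisup[OF True, of n] by simp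
    qed
    moreover have "Sup (range (\<lambda>n. b n \<omega>)) \<ge> 0"
      using cSUP_upper[OF UNIV_I bbdd, of 0 \<omega>] bn[of 0 \<omega>] by simp
    ultimately have "\<Phi> (SUP n. b n \<omega>) \<le> enn2real (Ss \<omega>)" using eq unfolding f_def by simp
    hence "ennreal (\<Phi> (SUP n. b n \<omega>)) \<le> ennreal (enn2real (Ss \<omega>))" by (rule ennreal_leI)
    also have "\<dots> = Ss \<omega>" using True unfolding H_def by (simp add: less_top[symmetric])
    finally show ?thesis .
  qed
  have Tpt: "ennreal (\<Phi> (T \<omega>)) \<le> ennreal (\<Phi> 1) + ennreal (\<Phi> (2 * Z \<omega>)) + Ss \<omega>" for \<omega>
  proof -
    have p: "\<Phi> 1 \<ge> 0" "\<Phi> (2 * Z \<omega>) \<ge> 0" "\<Phi> (SUP n. b n \<omega>) \<ge> 0" using orl_nonneg[OF o] by auto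
    have "\<Phi> (T \<omega>) \<le> \<Phi> 1 + \<Phi> (2 * Z \<omega>) + \<Phi> (SUP n. b n \<omega>)"
    proof -
      have mx: "\<Phi> (max x y) \<le> \<Phi> x + \<Phi> y" for x y
        using orl_nonneg[OF o, of x] orl_nonneg[OF o, of y] by (cases "x \<le> y") (simp_all add: max_def)
      have "\<Phi> (T \<omega>) \<le> \<Phi> (max 1 (2 * Z \<omega>)) + \<Phi> (SUP n. b n \<omega>)" unfolding T_def by (rule mx)
      also have "\<dots> \<le> \<Phi> 1 + \<Phi> (2 * Z \<omega>) + \<Phi> (SUP n. b n \<omega>)" using mx[of 1 "2 * Z \<omega>"] by linarith
      finally show ?thesis .
    qed
    hence "ennreal (\<Phi> (T \<omega>)) \<le> ennreal (\<Phi> 1 + \<Phi> (2 * Z \<omega>) + \<Phi> (SUP n. b n \<omega>))" by (rule ennreal_leI)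
    also have "\<dots> = ennreal (\<Phi> 1) + ennreal (\<Phi> (2 * Z \<omega>)) + ennreal (\<Phi> (SUP n. b n \<omega>))"
      using p by (simp add: ennreal_plus)
    also have "\<dots> \<le> ennreal (\<Phi> 1) + ennreal (\<Phi> (2 * Z \<omega>)) + Ss \<omega>"
      by (intro add_left_mono PhiSup)
    finally show ?thesis .
  qed
  have Tmod: "(\<integral>\<^sup>+ \<omega>. ennreal (\<Phi> (T \<omega>)) \<partial>M) < \<infinity>"
  proof -
    have [measurable]: "Z \<in> borel_measurable M" by (rule Zm)
    have [measurable]: "(\<lambda>\<omega>. \<Phi> (2 * Z \<omega>)) \<in> borel_measurable M" by (rule orl_meas[OF o]) measurable
    have "(\<integral>\<^sup>+ \<omega>. ennreal (\<Phi> (T \<omega>)) \<partial>M) \<le> (\<integral>\<^sup>+ \<omega>. ennreal (\<Phi> 1) + ennreal (\<Phi> (2 * Z \<omega>)) + Ss \<omega> \<partial>M)"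
      by (rule nn_integral_mono) (rule Tpt)
    also have "\<dots> = (\<integral>\<^sup>+ \<omega>. ennreal (\<Phi> 1) + ennreal (\<Phi> (2 * Z \<omega>)) \<partial>M) + (\<integral>\<^sup>+ \<omega>. Ss \<omega> \<partial>M)"
      by (rule nn_integral_add) measurable
    also have "(\<integral>\<^sup>+ \<omega>. ennreal (\<Phi> 1) + ennreal (\<Phi> (2 * Z \<omega>)) \<partial>M) = ennreal (\<Phi> 1) + (\<integral>\<^sup>+ \<omega>. ennreal (\<Phi> (2 * Z \<omega>)) \<partial>M)"
      by (subst nn_integral_add) (simp_all add: P.emeasure_space_1)
    also have "ennreal (\<Phi> 1) + (\<integral>\<^sup>+ \<omega>. ennreal (\<Phi> (2 * Z \<omega>)) \<partial>M) + (\<integral>\<^sup>+ \<omega>. Ss \<omega> \<partial>M) < \<infinity>"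
      using Zfin[of 2] Ssint by (simp add: less_top[symmetric])
    finally show ?thesis .
  qed
  from g_exists[OF \<rho>pos \<rho>lim] obtain g :: "real \<Rightarrow> real" where
    g: "continuous_on UNIV g \<and> strict_mono_on {0..} g \<and> g 0 = 0 \<and> (\<forall>\<delta>\<ge>0. g \<delta> \<ge> 0) \<and>
     (\<forall>\<delta>>0. g \<delta> \<ge> 1 \<or> (\<exists>j. 2*\<delta> \<le> \<rho> j \<and> g \<delta> \<ge> (1/2)^(Suc j)))"
    by (elim exE)
  have gc: "continuous_on UNIV g" and gsm: "strict_mono_on {0..} g" and g0: "g 0 = 0"
    and gnn: "\<And>\<delta>. \<delta> \<ge> 0 \<Longrightarrow> g \<delta> \<ge> 0"
    and gmain: "\<And>\<delta>. \<delta> > 0 \<Longrightarrow> g \<delta> \<ge> 1 \<or> (\<exists>j. 2*\<delta> \<le> \<rho> j \<and> g \<delta> \<ge> (1/2)^(Suc j))"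
    using g by simp_all
  have bound: "modulus_cont X (\<lambda>x. \<xi> x \<omega>) \<delta> \<le> T \<omega> * g \<delta>" if w: "\<omega> \<in> H" and d0: "\<delta> \<ge> 0" for \<omega> \<delta>
  proof (cases "\<delta> = 0")
    case True
    thus ?thesis using mod0 g0 by simp
  next
    case False
    hence dp: "\<delta> > 0" using d0 by simp
    have m: "modulus_cont X (\<lambda>x. \<xi> x \<omega>) \<delta> \<le> W (2*\<delta>) \<omega>" by (rule modW[OF HG[OF w] dp])
    have Tp: "T \<omega> > 0" using T1[of \<omega>] by simp
    from gmain[OF dp] show ?thesis
    proof
      assume g1: "g \<delta> \<ge> 1"
      have "W (2*\<delta>) \<omega> \<le> T \<omega>" using W2Z[of "2*\<delta>" \<omega>] TZ[of \<omega>] dp by simp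
      also have "\<dots> = T \<omega> * 1" by simp
      also have "\<dots> \<le> T \<omega> * g \<delta>" using g1 Tp by (intro mult_left_mono) auto
      finally show ?thesis using m by simp
    next
      assume "\<exists>j. 2*\<delta> \<le> \<rho> j \<and> g \<delta> \<ge> (1/2)^(Suc j)"
      then obtain j where j: "2*\<delta> \<le> \<rho> j" "g \<delta> \<ge> (1/2)^(Suc j)" by blast
      have "W (2*\<delta>) \<omega> \<le> W (\<rho> j) \<omega>" using j(1) dp by (intro Wmono) auto
      also have "\<dots> = b j \<omega> * (1/2)^(Suc j)" unfolding b_def a_def using w by (simp add: power_one_over)
      also have "\<dots> \<le> T \<omega> * (1/2)^(Suc j)" using Tb[of j \<omega>] by (intro mult_right_mono) auto
      also have "\<dots> \<le> T \<omega> * g \<delta>" using j(2) Tp by (intro mult_left_mono) auto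
      finally show ?thesis using m by simp
    qed
  qed
  define A where "A = {k. k > 0 \<and> (\<integral>\<^sup>+ \<omega>. ennreal (\<Phi> (T \<omega> / k)) \<partial>M) \<le> 1}"
  have Nrm: "orlicz_norm M \<Phi> T = Inf (ereal ` A)" unfolding orlicz_norm_def A_def ..
  define I where "I = (\<integral>\<^sup>+ \<omega>. ennreal (\<Phi> (T \<omega>)) \<partial>M)"
  define c where "c = max 1 (enn2real I)"
  have c1: "c \<ge> 1" unfolding c_def by simp
  have cA: "c \<in> A"
  proof -
    have "(\<integral>\<^sup>+ \<omega>. ennreal (\<Phi> (T \<omega> / c)) \<partial>M) \<le> (\<integral>\<^sup>+ \<omega>. ennreal (1/c) * ennreal (\<Phi> (T \<omega>)) \<partial>M)"
    proof (rule nn_integral_mono)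
      fix \<omega>
      have "\<Phi> (T \<omega> / c) = \<Phi> ((1/c) * T \<omega>)" by simp
      also have "\<dots> \<le> (1/c) * \<Phi> (T \<omega>)" using c1 by (intro orl_scale[OF o]) auto
      finally have "ennreal (\<Phi> (T \<omega> / c)) \<le> ennreal ((1/c) * \<Phi> (T \<omega>))" by (rule ennreal_leI)
      also have "ennreal ((1/c) * \<Phi> (T \<omega>)) = ennreal (1/c) * ennreal (\<Phi> (T \<omega>))"
        by (rule ennreal_mult) (use c1 orl_nonneg[OF o, of "T \<omega>"] in auto)
      finally show "ennreal (\<Phi> (T \<omega> / c)) \<le> ennreal (1/c) * ennreal (\<Phi> (T \<omega>))" .
    qed
    also have "\<dots> = ennreal (1/c) * I" unfolding I_def
    proof (rule nn_integral_cmult)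
      have [measurable]: "T \<in> borel_measurable M" by (rule Tm)
      show "(\<lambda>\<omega>. ennreal (\<Phi> (T \<omega>))) \<in> borel_measurable M"
        using orl_meas[OF o Tm] by measurable
    qed
    also have "I = ennreal (enn2real I)" using Tmod unfolding I_def by (simp add: less_top[symmetric])
    also have "ennreal (1/c) * ennreal (enn2real I) = ennreal ((1/c) * enn2real I)"
      by (rule ennreal_mult[symmetric]) (use c1 in auto)
    also have "\<dots> \<le> 1"
    proof -
      have "(1/c) * enn2real I \<le> 1" using c1 unfolding c_def by (simp add: field_simps)
      thus ?thesis by (simp add: ennreal_le_1)
    qed
    finally show ?thesis unfolding A_def using c1 by simp
  qed
  obtain U where U: "U > 0" "\<And>u. u \<ge> U \<Longrightarrow> \<Phi> u > 1" using orl_big[OF o, of 1] by blast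
  have Alow: "k \<ge> 1/U" if "k \<in> A" for k
  proof (rule ccontr)
    assume "\<not> k \<ge> 1/U"
    hence kU: "k < 1/U" by simp
    have kp: "k > 0" and kint: "(\<integral>\<^sup>+ \<omega>. ennreal (\<Phi> (T \<omega> / k)) \<partial>M) \<le> 1" using that unfolding A_def by auto
    have "U < 1/k" using kU kp U(1) by (simp add: field_simps)
    hence big: "\<Phi> (1/k) > 1" using U(2) by simp
    have "(\<integral>\<^sup>+ \<omega>. ennreal (\<Phi> (1/k)) \<partial>M) \<le> (\<integral>\<^sup>+ \<omega>. ennreal (\<Phi> (T \<omega> / k)) \<partial>M)"
    proof (rule nn_integral_mono)
      fix \<omega>
      have "1/k \<le> T \<omega> / k" using T1[of \<omega>] kp by (simp add: divide_right_mono)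
      thus "ennreal (\<Phi> (1/k)) \<le> ennreal (\<Phi> (T \<omega> / k))" using kp by (intro ennreal_leI orl_mono[OF o]) auto
    qed
    also have "\<dots> \<le> 1" by (rule kint)
    finally have "ennreal (\<Phi> (1/k)) \<le> 1" by (simp add: P.emeasure_space_1)
    thus False using big by (simp add: ennreal_le_1)
  qed
  have Nle: "orlicz_norm M \<Phi> T \<le> ereal c" unfolding Nrm by (rule Inf_lower) (use cA in blast)
  have Nge: "orlicz_norm M \<Phi> T \<ge> ereal (1/U)" unfolding Nrm by (rule Inf_greatest) (use Alow in auto)
  define nn where "nn = real_of_ereal (orlicz_norm M \<Phi> T)"
  have nnE: "orlicz_norm M \<Phi> T = ereal nn" unfolding nn_def using Nle Nge
    by (cases "orlicz_norm M \<Phi> T") auto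
  have nnpos: "nn > 0"
  proof -
    have "1/U \<le> nn" using Nge unfolding nnE by simp
    moreover have "1/U > 0" using U(1) by simp
    ultimately show ?thesis by linarith
  qed
  define \<tau> where "\<tau> \<omega> = T \<omega> / nn" for \<omega>
  define g' where "g' \<delta> = nn * g \<delta>" for \<delta>
  have \<tau>m: "\<tau> \<in> borel_measurable M"
  proof -
    have [measurable]: "T \<in> borel_measurable M" by (rule Tm)
    show ?thesis unfolding \<tau>_def by measurable
  qed
  have \<tau>n: "\<forall>\<omega>\<in>space M. \<tau> \<omega> \<ge> 0" unfolding \<tau>_def
  proof
    fix \<omega> show "0 \<le> T \<omega> / nn" using T1[of \<omega>] nnpos by simp
  qed
  have \<tau>norm: "orlicz_norm M \<Phi> \<tau> = 1"
    unfolding \<tau>_def orlicz_norm_div[OF nnpos] nnE using nnpos by simp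
  have g'c: "continuous_on UNIV g'" unfolding g'_def by (intro continuous_intros gc)
  have g'cd: "continuous_on {0..diameter X} g'" by (rule continuous_on_subset[OF g'c]) simp
  have g'sm: "strict_mono_on {0..diameter X} g'"
  proof (rule strict_mono_onI)
    fix x y assume "x \<in> {0..diameter X}" "y \<in> {0..diameter X}" "x < y"
    hence "g x < g y" using gsm unfolding strict_mono_on_def by auto
    thus "g' x < g' y" unfolding g'_def using nnpos by simp
  qed
  have g'nn: "\<forall>\<delta>\<in>{0..diameter X}. g' \<delta> \<ge> 0" unfolding g'_def using gnn nnpos by simp
  have g'0: "g' 0 = 0" unfolding g'_def using g0 by simp
  have g'lim: "(g' \<longlongrightarrow> 0) (at 0 within {0<..diameter X})"
  proof -
    have "isCont g' 0" using g'c continuous_on_eq_continuous_at[OF open_UNIV] by blast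
    hence "continuous (at 0 within {0<..diameter X}) g'" by (rule continuous_at_imp_continuous_at_within)
    thus ?thesis unfolding continuous_within g'0 .
  qed
  have AEb: "AE \<omega> in M. \<forall>\<delta>\<in>{0..diameter X}. modulus_cont X (\<lambda>x. \<xi> x \<omega>) \<delta> \<le> \<tau> \<omega> * g' \<delta>"
    using HAE
  proof eventually_elim
    case (elim \<omega>)
    show ?case
    proof
      fix \<delta> assume "\<delta> \<in> {0..diameter X}"
      hence "modulus_cont X (\<lambda>x. \<xi> x \<omega>) \<delta> \<le> T \<omega> * g \<delta>" using bound[OF elim] by simp
      also have "T \<omega> * g \<delta> = \<tau> \<omega> * g' \<delta>" unfolding \<tau>_def g'_def using nnpos by simp
      finally show "modulus_cont X (\<lambda>x. \<xi> x \<omega>) \<delta> \<le> \<tau> \<omega> * g' \<delta>" .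
    qed
  qed
  show ?thesis
    apply (rule exI[of _ \<tau>])
    apply (rule exI[of _ g'])
    using \<tau>m \<tau>n \<tau>norm g'cd g'sm g'nn g'0 g'lim AEb by (intro conjI)
qed


end
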